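(* Let $y>0$ and $\mathscr{C}_n(y)=\displaystyle\int_0^y\frac{t\sinh t}{t^2+\pi^2n^2}\,dt$ for $n\in\mathbb{Z}$. Then the discrete Hilbert transform of $(\mathscr{C}_n(y))_{n\in\mathbb{Z}}$, i.e. the sequence $\frac{1}{\pi}\sum_{m\in\mathbb{Z}\setminus\{0\}}\frac{\mathscr{C}_{n-m}(y)}{m}$, is given by \[ \mathscr{D}_n(y)=\frac{1}{\pi n}\Bigl(\sinh y-\frac{y^2\sinh y}{y^2+\pi^2n^2}\Bigr)\quad(n\neq0),\qquad \mathscr{D}_0(y)=0. \] *)

theory Defs
  imports "HOL-Analysis.Analysis"
begin

definition calC :: "int \<Rightarrow> real \<Rightarrow> real" where
  "calC n y = integral {0..y} (\<lambda>t. t * sinh t / (t\<^sup>2 + pi\<^sup>2 * (of_int n)\<^sup>2))"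

definition calD :: "int \<Rightarrow> real \<Rightarrow> real" where
  "calD n y = (if n = 0 then 0 else
     (1 / (pi * of_int n)) * (sinh y - y\<^sup>2 * sinh y / (y\<^sup>2 + pi\<^sup>2 * (of_int n)\<^sup>2)))"

end

theory Submission
  imports Defs "HOL-Analysis.Analysis" "HOL-Real_Asymp.Real_Asymp"
begin

lemma digamma_reflection:
  fixes z :: complex
  assumes z: "z \<notin> \<int>"
  shows "Digamma (1 - z) - Digamma z = of_real pi * cot (of_real pi * z)"
proof -
  have z1: "z \<notin> \<int>\<^sub>\<le>\<^sub>0" using z nonpos_Ints_subset_Ints by blast
  have "1 - z \<notin> \<int>" using z Ints_diff[of 1 "1 - z"] by auto
  hence z2: "1 - z \<notin> \<int>\<^sub>\<le>\<^sub>0" using nonpos_Ints_subset_Ints by blast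
  have s: "sin (of_real pi * z) \<noteq> 0" using z by (subst sin_eq_0) auto
  have eqf: "(\<lambda>w::complex. Gamma w * Gamma (1 - w)) = (\<lambda>w. of_real pi / sin (of_real pi * w))"
    using Gamma_reflection_complex by blast
  have D1: "((\<lambda>w. Gamma w * Gamma (1 - w)) has_field_derivative
      (Gamma z * Digamma z * Gamma (1 - z) - Gamma z * (Gamma (1 - z) * Digamma (1 - z)))) (at z)"
    using z1 z2 by (auto intro!: derivative_eq_intros)
  have D2: "((\<lambda>w. of_real pi / sin (of_real pi * w)) has_field_derivative
      (- (of_real pi * (cos (of_real pi * z) * of_real pi)) / (sin (of_real pi * z))\<^sup>2)) (at z)"
    using s by (auto intro!: derivative_eq_intros simp: power2_eq_square)
  have "Gamma z * Digamma z * Gamma (1 - z) - Gamma z * (Gamma (1 - z) * Digamma (1 - z))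
       = - (of_real pi * (cos (of_real pi * z) * of_real pi)) / (sin (of_real pi * z))\<^sup>2"
    using DERIV_unique[OF D1 D2[folded eqf]] .
  moreover have "Gamma z * Gamma (1 - z) * (Digamma z - Digamma (1 - z)) =
     Gamma z * Digamma z * Gamma (1 - z) - Gamma z * (Gamma (1 - z) * Digamma (1 - z))"
    by (simp add: algebra_simps)
  ultimately have "(of_real pi / sin (of_real pi * z)) * (Digamma z - Digamma (1 - z))
      = - (of_real pi * (cos (of_real pi * z) * of_real pi)) / (sin (of_real pi * z))\<^sup>2"
    using Gamma_reflection_complex[of z] by simp
  hence eq: "(of_real pi / sin (of_real pi * z)) * (Digamma z - Digamma (1 - z))
      = - (of_real pi * (cos (of_real pi * z) * of_real pi)) / (sin (of_real pi * z))\<^sup>2" .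
  have "Digamma z - Digamma (1 - z) = (sin (of_real pi * z) / of_real pi) * ((of_real pi / sin (of_real pi * z)) * (Digamma z - Digamma (1 - z)))"
    using s by simp
  also have "\<dots> = (sin (of_real pi * z) / of_real pi) * (- (of_real pi * (cos (of_real pi * z) * of_real pi)) / (sin (of_real pi * z))\<^sup>2)"
    by (simp only: eq)
  also have "\<dots> = - of_real pi * cos (of_real pi * z) / sin (of_real pi * z)"
    using s by (simp add: field_simps power2_eq_square)
  finally have "Digamma z - Digamma (1 - z) = - of_real pi * cos (of_real pi * z) / sin (of_real pi * z)" .
  then show ?thesis by (simp add: cot_def algebra_simps)
qed

lemma sinh_cosh_of_real:
  "sinh (complex_of_real x) = of_real (sinh x)" "cosh (complex_of_real x) = of_real (cosh x)"
  by (simp_all add: sinh_field_def cosh_field_def exp_of_real[symmetric])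

lemma coth_series:
  fixes t :: real assumes t: "t > 0"
  shows "(\<lambda>k::nat. 1 / (t\<^sup>2 + pi\<^sup>2 * (real k)\<^sup>2)) sums ((cosh t / sinh t + 1 / t) / (2 * t))"
proof -
  define a where "a = t / pi"
  have a: "a > 0" using t by (simp add: a_def)
  define z where "z = \<i> * complex_of_real a"
  have zI: "z \<notin> \<int>"
  proof
    assume "z \<in> \<int>"
    then obtain k where "z = of_int k" by (auto elim: Ints_cases)
    then have "Im z = 0" by simp
    with a show False by (simp add: z_def)
  qed
  have z0: "z \<noteq> 0" "-z \<noteq> 0" using a by (auto simp: z_def)
  have S1: "(\<lambda>k. inverse (of_nat (Suc k)) - inverse (-z + of_nat k)) sums (Digamma (-z) + euler_mascheroni)"
    using summable_sums[OF summable_Digamma[of "-z"]] z0 by (simp add: Digamma_def)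
  have S2: "(\<lambda>k. inverse (of_nat (Suc k)) - inverse (z + of_nat k)) sums (Digamma z + euler_mascheroni)"
    using summable_sums[OF summable_Digamma[of "z"]] z0 by (simp add: Digamma_def)
  have S: "(\<lambda>k. inverse (z + of_nat k) - inverse (-z + of_nat k)) sums (Digamma (-z) - Digamma z)"
    using sums_diff[OF S1 S2] by (simp add: algebra_simps)
  have Dm: "Digamma (-z) = Digamma (1 - z) + 1/z"
    using Digamma_plus1[of "-z"] z0 by (simp add: algebra_simps)
  have spt: "sinh t \<noteq> 0" using t by simp
  have piz: "complex_of_real pi * z = \<i> * of_real t"
    using a_def by (simp add: z_def)
  have cotv: "cot (complex_of_real pi * z) = - \<i> * of_real (cosh t / sinh t)"
  proof -
    have c: "cos (\<i> * complex_of_real t) = of_real (cosh t)"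
      by (simp add: cos_conv_cosh sinh_cosh_of_real)
    have s: "sin (\<i> * complex_of_real t) = \<i> * of_real (sinh t)"
      by (simp add: sin_conv_sinh sinh_cosh_of_real)
    show ?thesis unfolding piz cot_def c s using spt by (simp add: field_simps)
  qed
  have val: "Digamma (-z) - Digamma z = - \<i> * of_real (pi * (cosh t / sinh t + 1 / t))"
  proof -
    have "Digamma (-z) - Digamma z = (Digamma (1 - z) - Digamma z) + 1 / z" using Dm by simp
    also have "\<dots> = of_real pi * cot (of_real pi * z) + 1 / z"
      using digamma_reflection[OF zI] by simp
    also have "\<dots> = - \<i> * of_real (pi * (cosh t / sinh t + 1 / t))"
      unfolding cotv using t by (simp add: z_def a_def field_simps)
    finally show ?thesis .
  qed
  have trm: "inverse (z + of_nat k) - inverse (-z + of_nat k) =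
      - \<i> * of_real (2 * pi * t * (1 / (t\<^sup>2 + pi\<^sup>2 * (real k)\<^sup>2)))" for k :: nat
  proof -
    have d1: "z + of_nat k \<noteq> 0" using a by (auto simp: z_def complex_eq_iff)
    have d2: "-z + of_nat k \<noteq> 0" using a by (auto simp: z_def complex_eq_iff)
    have "t\<^sup>2 + pi\<^sup>2 * (real k)\<^sup>2 > 0" using t by (intro add_pos_nonneg) auto
    hence d3: "t\<^sup>2 + pi\<^sup>2 * (real k)\<^sup>2 \<noteq> 0" by simp
    have "inverse (z + of_nat k) - inverse (-z + of_nat k) = - 2 * z / ((of_nat k)\<^sup>2 - z\<^sup>2)"
      using d1 d2 by (simp add: field_simps power2_eq_square)
    also have "\<dots> = - \<i> * of_real (2 * pi * t * (1 / (t\<^sup>2 + pi\<^sup>2 * (real k)\<^sup>2)))"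
      using d3 t unfolding z_def a_def by (simp add: field_simps power2_eq_square complex_eq_iff)
    finally show ?thesis .
  qed
  from S have "(\<lambda>k. - \<i> * of_real (2 * pi * t * (1 / (t\<^sup>2 + pi\<^sup>2 * (real k)\<^sup>2)))) sums
      (- \<i> * of_real (pi * (cosh t / sinh t + 1 / t)))"
    unfolding trm val .
  from sums_mult[OF this, of \<i>]
  have "(\<lambda>k. complex_of_real (2 * pi * t * (1 / (t\<^sup>2 + pi\<^sup>2 * (real k)\<^sup>2)))) sums
      complex_of_real (pi * (cosh t / sinh t + 1 / t))" by simp
  hence "(\<lambda>k. 2 * pi * t * (1 / (t\<^sup>2 + pi\<^sup>2 * (real k)\<^sup>2))) sums (pi * (cosh t / sinh t + 1 / t))"
    by (simp only: sums_of_real_iff)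
  from sums_divide[OF this, of "2 * pi * t"]
  show ?thesis using t by simp
qed

lemma has_sum_int_split:
  fixes f :: "int \<Rightarrow> real"
  assumes "(f has_sum a) {1..}" "(f has_sum b) {..-1}"
  shows "(f has_sum (f 0 + a + b)) UNIV"
proof -
  have "(f has_sum f 0) {0}" by (rule has_sum_finiteI) auto
  from has_sum_Un_disjoint[OF this assms(1)] have "(f has_sum (f 0 + a)) ({0} \<union> {1..})" by auto
  moreover have "({0} \<union> {1..}) \<inter> {..-1::int} = {}" by auto
  ultimately have "(f has_sum (f 0 + a + b)) ({0} \<union> {1..} \<union> {..-1})"
    using has_sum_Un_disjoint[OF _ assms(2)] by blast
  moreover have "{0} \<union> {1..} \<union> {..-1::int} = UNIV" by auto
  ultimately show ?thesis by simp
qed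

lemma has_sum_pos_iff:
  fixes f :: "int \<Rightarrow> real"
  shows "((\<lambda>j::nat. f (int j + 1)) has_sum s) UNIV \<longleftrightarrow> (f has_sum s) {1..}"
  by (rule has_sum_reindex_bij_witness[where i = "\<lambda>b. nat (b - 1)" and j = "\<lambda>a. int a + 1"]) auto

lemma has_sum_neg_iff:
  fixes f :: "int \<Rightarrow> real"
  shows "((\<lambda>j::nat. f (- int j - 1)) has_sum s) UNIV \<longleftrightarrow> (f has_sum s) {..-1}"
  by (rule has_sum_reindex_bij_witness[where i = "\<lambda>b. nat (- b - 1)" and j = "\<lambda>a. - int a - 1"]) auto

lemma int_pairs_to_has_sum:
  fixes f :: "int \<Rightarrow> real"
  assumes s1: "summable (\<lambda>j. norm (f (int j + 1)))" and s2: "summable (\<lambda>j. norm (f (- int j - 1)))"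
    and p: "(\<lambda>j. f (int j + 1) + f (- int j - 1)) sums s"
  shows "(f has_sum (f 0 + s)) UNIV"
proof -
  define a where "a = (\<Sum>j. f (int j + 1))"
  define b where "b = (\<Sum>j. f (- int j - 1))"
  have sa: "(\<lambda>j. f (int j + 1)) sums a" unfolding a_def
    by (rule summable_sums[OF summable_norm_cancel[OF s1]])
  have sb: "(\<lambda>j. f (- int j - 1)) sums b" unfolding b_def
    by (rule summable_sums[OF summable_norm_cancel[OF s2]])
  have ha: "(f has_sum a) {1..}"
    using norm_summable_imp_has_sum[OF s1 sa] has_sum_pos_iff by blast
  have hb: "(f has_sum b) {..-1}"
    using norm_summable_imp_has_sum[OF s2 sb] has_sum_neg_iff by blast
  have "s = a + b" using sums_unique2[OF p sums_add[OF sa sb]] .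
  with has_sum_int_split[OF ha hb] show ?thesis by (simp add: add.assoc)
qed

lemma has_sum_int_to_pairs:
  fixes f :: "int \<Rightarrow> real"
  assumes h: "(f has_sum s) UNIV"
  shows "(\<lambda>j. f (int j + 1) + f (- int j - 1)) sums (s - f 0)"
proof -
  have "f summable_on UNIV" using h has_sum_imp_summable by blast
  hence "f summable_on {1..}" "f summable_on {..-1}" using summable_on_subset_banach by blast+
  hence ha: "(f has_sum infsum f {1..}) {1..}" and hb: "(f has_sum infsum f {..-1}) {..-1}"
    by (auto intro: has_sum_infsum)
  have sa: "(\<lambda>j. f (int j + 1)) sums infsum f {1..}"
    using ha has_sum_pos_iff has_sum_imp_sums by blast
  have sb: "(\<lambda>j. f (- int j - 1)) sums infsum f {..-1}"
    using hb has_sum_neg_iff has_sum_imp_sums by blast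
  have "s = f 0 + infsum f {1..} + infsum f {..-1}"
    using has_sum_unique[OF h has_sum_int_split[OF ha hb]] .
  with sums_add[OF sa sb] show ?thesis by simp
qed

lemma telescope_shift:
  fixes w :: "nat \<Rightarrow> real"
  assumes w: "w \<longlonglongrightarrow> 0"
  shows "(\<lambda>j. w (j + D) - w j) sums (- (\<Sum>i<D. w i))"
proof -
  have eq: "(\<lambda>j. w (j + D) - w j) = (\<lambda>j. \<Sum>i<D. w (Suc (j + i)) - w (j + i))"
  proof
    fix j
    show "w (j + D) - w j = (\<Sum>i<D. w (Suc (j + i)) - w (j + i))"
      using sum_lessThan_telescope[of "\<lambda>i. w (j + i)" D] by simp
  qed
  have T: "(\<lambda>j. w (Suc (j + i)) - w (j + i)) sums (0 - w i)" for i
  proof -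
    have "(\<lambda>j. w (j + i)) \<longlonglongrightarrow> 0" using LIMSEQ_ignore_initial_segment[OF w] .
    from telescope_sums[OF this] show "(\<lambda>j. w (Suc (j + i)) - w (j + i)) sums (0 - w i)" by simp
  qed
  have "(\<lambda>j. \<Sum>i<D. w (Suc (j + i)) - w (j + i)) sums (\<Sum>i<D. 0 - w i)"
    by (rule sums_sum) (rule T)
  then show ?thesis unfolding eq by (simp add: sum_negf)
qed

lemma odd_sum_shift:
  fixes u :: "real \<Rightarrow> real"
  assumes odd: "\<And>x. u (-x) = - u x"
  shows "(\<Sum>i<2*d. u (real i + 1 - real d)) = u (real d)"
proof (induction d)
  case 0
  have "u 0 = - u 0" using odd[of 0] by simp
  then show ?case by simp
next
  case (Suc d)
  have "(\<Sum>i<2 * Suc d. u (real i + 1 - real (Suc d))) = (\<Sum>i<Suc (Suc (2*d)). u (real i - real d))"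
    by (simp add: algebra_simps)
  also have "\<dots> = (\<Sum>i<Suc (2*d). u (real i - real d)) + u (real d + 1)"
    by (simp add: algebra_simps)
  also have "(\<Sum>i<Suc (2*d). u (real i - real d)) = u (- real d) + (\<Sum>i<2*d. u (real (Suc i) - real d))"
    by (subst sum.lessThan_Suc_shift) simp
  also have "(\<Sum>i<2*d. u (real (Suc i) - real d)) = u (real d)"
    using Suc.IH by (simp add: algebra_simps)
  finally show ?case using odd[of "real d"] by (simp add: add.commute)
qed

lemma U_pairs:
  fixes t :: real and n :: int
  assumes t: "t > 0" and n: "n \<ge> 0"
  defines "u \<equiv> \<lambda>x::real. x / (t\<^sup>2 + pi\<^sup>2 * x\<^sup>2)"
  shows "(\<lambda>j::nat. u (of_int n - (real j + 1)) + u (of_int n + (real j + 1))) sums (- u (of_int n))"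
proof -
  define d where "d = nat n"
  have nd: "of_int n = real d" using n by (simp add: d_def)
  have odd: "u (-x) = - u x" for x by (simp add: u_def)
  define w where "w i = u (real i + 1 - real d)" for i :: nat
  have w0: "w \<longlonglongrightarrow> 0" unfolding w_def u_def using t by real_asymp
  have eq: "u (of_int n - (real j + 1)) + u (of_int n + (real j + 1)) = w (j + 2*d) - w j" for j
  proof -
    have "u (of_int n - (real j + 1)) = - w j"
      unfolding w_def nd using odd[of "real j + 1 - real d"] by (simp add: algebra_simps)
    moreover have "u (of_int n + (real j + 1)) = w (j + 2*d)"
      unfolding w_def nd by (simp add: algebra_simps)
    ultimately show ?thesis by simp
  qed
  have "(\<lambda>j. w (j + 2*d) - w j) sums (- (\<Sum>i<2*d. w i))" by (rule telescope_shift[OF w0])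
  moreover have "(\<Sum>i<2*d. w i) = u (of_int n)"
    unfolding w_def nd by (rule odd_sum_shift[where u=u, OF odd])
  ultimately show ?thesis unfolding eq by simp
qed

lemma G_int:
  fixes t :: real assumes t: "t > 0"
  shows "((\<lambda>k::int. 1 / (t\<^sup>2 + pi\<^sup>2 * (of_int k)\<^sup>2)) has_sum (cosh t / (t * sinh t))) UNIV"
proof -
  define g where "g = (\<lambda>x::real. 1 / (t\<^sup>2 + pi\<^sup>2 * x\<^sup>2))"
  have gpos: "g x > 0" for x unfolding g_def using t by (intro divide_pos_pos add_pos_nonneg) auto
  have cs: "(\<lambda>k::nat. g (real k)) sums ((cosh t / sinh t + 1 / t) / (2 * t))"
    unfolding g_def by (rule coth_series[OF t])
  hence cs1: "(\<lambda>j::nat. g (real j + 1)) sums ((cosh t / sinh t + 1 / t) / (2 * t) - g 0)"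
    using sums_Suc_iff[of "\<lambda>k. g (real k)"] by (simp add: add.commute)
  have sm: "summable (\<lambda>j::nat. norm (g (real j + 1)))"
    using sums_summable[OF cs1] gpos by (simp add: less_imp_le)
  have gm: "g (- x) = g x" for x by (simp add: g_def)
  have ps: "(\<lambda>j::nat. g (of_int (int j + 1)) + g (of_int (- int j - 1))) sums
        (2 * ((cosh t / sinh t + 1 / t) / (2 * t) - g 0))"
  proof -
    have "(\<lambda>j::nat. g (of_int (int j + 1)) + g (of_int (- int j - 1))) = (\<lambda>j. 2 * g (real j + 1))"
    proof
      fix j :: nat
      have "of_int (- int j - 1) = - (real j + 1)" by simp
      then show "g (of_int (int j + 1)) + g (of_int (- int j - 1)) = 2 * g (real j + 1)"
        using gm[of "real j + 1"] by simp
    qed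
    then show ?thesis using sums_mult[OF cs1, of 2] by simp
  qed
  have sm1: "summable (\<lambda>j. norm (g (of_int (int j + 1))))" using sm by simp
  have sm2: "summable (\<lambda>j. norm (g (of_int (- int j - 1))))"
  proof -
    have "of_int (- int j - 1) = - (real j + 1)" for j by simp
    then have "norm (g (of_int (- int j - 1))) = norm (g (real j + 1))" for j using gm by metis
    then show ?thesis using sm by simp
  qed
  have "((\<lambda>k. g (of_int k)) has_sum (g 0 + 2 * ((cosh t / sinh t + 1 / t) / (2 * t) - g 0))) UNIV"
    using int_pairs_to_has_sum[where f = "\<lambda>k. g (of_int k)", OF sm1 sm2 ps] by simp
  moreover have "g 0 + 2 * ((cosh t / sinh t + 1 / t) / (2 * t) - g 0) = cosh t / (t * sinh t)"
    using t by (simp add: g_def field_simps power2_eq_square)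
  ultimately show ?thesis by (simp add: g_def)
qed

lemma G_shift_pairs:
  fixes t :: real and n :: int assumes t: "t > 0"
  defines "g \<equiv> \<lambda>x::real. 1 / (t\<^sup>2 + pi\<^sup>2 * x\<^sup>2)"
  shows "(\<lambda>j::nat. g (of_int n - (real j + 1)) + g (of_int n + (real j + 1))) sums
          (cosh t / (t * sinh t) - g (of_int n))"
proof -
  have "((\<lambda>k::int. g (of_int k)) has_sum (cosh t / (t * sinh t))) UNIV"
    using G_int[OF t] by (simp add: g_def)
  also have "((\<lambda>k::int. g (of_int k)) has_sum (cosh t / (t * sinh t))) UNIV \<longleftrightarrow>
        ((\<lambda>k::int. g (of_int (n + k))) has_sum (cosh t / (t * sinh t))) UNIV"
    by (rule has_sum_reindex_bij_witness[where i = "\<lambda>k. n + k" and j = "\<lambda>k. k - n"]) auto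
  finally have h: "((\<lambda>k::int. g (of_int (n + k))) has_sum (cosh t / (t * sinh t))) UNIV" .
  from has_sum_int_to_pairs[OF h] show ?thesis by (simp add: algebra_simps)
qed

lemma term_identity:
  fixes t N m s :: real
  assumes t: "t > 0" and m: "m > 0"
  shows "(t * s / (t\<^sup>2 + pi\<^sup>2 * (N - m)\<^sup>2) - t * s / (t\<^sup>2 + pi\<^sup>2 * (N + m)\<^sup>2)) / m =
     (t * s * (1 / (t\<^sup>2 + pi\<^sup>2 * N\<^sup>2)) * pi\<^sup>2) *
     (N * (1 / (t\<^sup>2 + pi\<^sup>2 * (N - m)\<^sup>2) + 1 / (t\<^sup>2 + pi\<^sup>2 * (N + m)\<^sup>2)) +
      ((N - m) / (t\<^sup>2 + pi\<^sup>2 * (N - m)\<^sup>2) + (N + m) / (t\<^sup>2 + pi\<^sup>2 * (N + m)\<^sup>2)))"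
proof -
  have p: "t\<^sup>2 + pi\<^sup>2 * x\<^sup>2 > 0" for x :: real using t by (intro add_pos_nonneg) auto
  have a: "t\<^sup>2 + pi\<^sup>2 * (N - m)\<^sup>2 \<noteq> 0" "t\<^sup>2 + pi\<^sup>2 * (N + m)\<^sup>2 \<noteq> 0" "t\<^sup>2 + pi\<^sup>2 * N\<^sup>2 \<noteq> 0"
    using p by (metis less_irrefl)+
  show ?thesis using a m apply (simp add: divide_simps) apply algebra done
qed

lemma final_value:
  fixes t N s c :: real
  assumes "s \<noteq> 0" "t > 0" "t\<^sup>2 + pi\<^sup>2 * N\<^sup>2 \<noteq> 0"
  shows "(t * s * (1 / (t\<^sup>2 + pi\<^sup>2 * N\<^sup>2)) * pi\<^sup>2) * (N * (c / (t * s) - (1 / (t\<^sup>2 + pi\<^sup>2 * N\<^sup>2))) + - (N / (t\<^sup>2 + pi\<^sup>2 * N\<^sup>2))) =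
      pi\<^sup>2 * N * (c - 2 * t * s / (t\<^sup>2 + pi\<^sup>2 * N\<^sup>2)) / (t\<^sup>2 + pi\<^sup>2 * N\<^sup>2)"
  using assms apply (simp add: divide_simps) apply algebra done

lemma pointwise:
  fixes t :: real and n :: int assumes t: "t > 0" and n: "n \<ge> 0"
  shows "(\<lambda>j::nat. (t * sinh t / (t\<^sup>2 + pi\<^sup>2 * (of_int n - (real j + 1))\<^sup>2)
                  - t * sinh t / (t\<^sup>2 + pi\<^sup>2 * (of_int n + (real j + 1))\<^sup>2)) / (real j + 1)) sums
     (pi\<^sup>2 * of_int n * (cosh t - 2 * t * sinh t / (t\<^sup>2 + pi\<^sup>2 * (of_int n)\<^sup>2)) / (t\<^sup>2 + pi\<^sup>2 * (of_int n)\<^sup>2))"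
proof -
  define g where "g = (\<lambda>x::real. 1 / (t\<^sup>2 + pi\<^sup>2 * x\<^sup>2))"
  define u where "u = (\<lambda>x::real. x / (t\<^sup>2 + pi\<^sup>2 * x\<^sup>2))"
  define N where "N = (of_int n :: real)"
  define A where "A = g N"
  define C0 where "C0 = cosh t / (t * sinh t)"
  have G: "(\<lambda>j::nat. g (N - (real j + 1)) + g (N + (real j + 1))) sums (C0 - A)"
    using G_shift_pairs[OF t, of n] unfolding g_def N_def A_def C0_def .
  have U: "(\<lambda>j::nat. u (N - (real j + 1)) + u (N + (real j + 1))) sums (- u N)"
    using U_pairs[OF t n] unfolding u_def N_def .
  have "(\<lambda>j::nat. (t * sinh t * A * pi\<^sup>2) * (N * (g (N - (real j + 1)) + g (N + (real j + 1))) +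
        (u (N - (real j + 1)) + u (N + (real j + 1))))) sums
        ((t * sinh t * A * pi\<^sup>2) * (N * (C0 - A) + - u N))"
    by (intro sums_mult sums_add G U)
  moreover have "(t * sinh t * A * pi\<^sup>2) * (N * (C0 - A) + - u N) =
      pi\<^sup>2 * N * (cosh t - 2 * t * sinh t / (t\<^sup>2 + pi\<^sup>2 * N\<^sup>2)) / (t\<^sup>2 + pi\<^sup>2 * N\<^sup>2)"
  proof -
    have "sinh t \<noteq> 0" using t by simp
    moreover have "t\<^sup>2 + pi\<^sup>2 * N\<^sup>2 \<noteq> 0"
      using t by (metis add_pos_nonneg less_irrefl mult_nonneg_nonneg zero_le_power2 zero_less_power2)
    ultimately show ?thesis using t final_value[of "sinh t" t N "cosh t"]
      by (simp add: A_def g_def u_def C0_def)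
  qed
  moreover have "(t * sinh t / (t\<^sup>2 + pi\<^sup>2 * (N - (real j + 1))\<^sup>2)
                  - t * sinh t / (t\<^sup>2 + pi\<^sup>2 * (N + (real j + 1))\<^sup>2)) / (real j + 1) =
     (t * sinh t * A * pi\<^sup>2) * (N * (g (N - (real j + 1)) + g (N + (real j + 1))) +
        (u (N - (real j + 1)) + u (N + (real j + 1))))" for j :: nat
    using term_identity[where t=t and m="real j + 1" and N=N and s="sinh t"] t unfolding A_def g_def u_def by simp
  ultimately show ?thesis unfolding N_def by simp
qed

lemma sinh_le_t_cosh:
  fixes t :: real assumes "t \<ge> 0" shows "sinh t \<le> t * cosh t"
proof -
  have "(\<lambda>x. x * cosh x - sinh x) 0 \<le> (\<lambda>x. x * cosh x - sinh x) t"
  proof (rule DERIV_nonneg_imp_nondecreasing[OF assms])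
    fix x :: real assume "0 \<le> x" "x \<le> t"
    show "\<exists>d. ((\<lambda>x. x * cosh x - sinh x) has_real_derivative d) (at x) \<and> d \<ge> 0"
      by (rule exI[of _ "x * sinh x"], rule conjI, (rule derivative_eq_intros refl)+)
         (use \<open>0 \<le> x\<close> in auto)
  qed
  then show ?thesis by simp
qed

definition psi :: "real \<Rightarrow> real" where
  "psi t = (if t = 0 then 1 else sinh t / t)"

lemma continuous_psi: "continuous_on UNIV psi"
proof -
  have "isCont psi x" for x
  proof (cases "x = 0")
    case True
    have d: "((\<lambda>x. sinh x) has_real_derivative 1) (at (0::real))"
      by (auto intro!: derivative_eq_intros)
    have "((\<lambda>h. (sinh (0 + h) - sinh 0) / h) \<longlongrightarrow> (1::real)) (at 0)"
      using DERIV_def[THEN iffD1, OF d] by simp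
    hence lim: "((\<lambda>h. sinh h / h) \<longlongrightarrow> 1) (at (0::real))" by simp
    have "(psi \<longlongrightarrow> 1) (at 0)"
      by (rule Lim_transform_eventually[OF lim]) (auto simp: psi_def eventually_at_filter)
    hence "(psi \<longlongrightarrow> psi 0) (at 0)" by (simp add: psi_def)
    then show ?thesis using True by (simp add: isCont_def)
  next
    case False
    have "eventually (\<lambda>t. t \<in> - {0}) (nhds x)"
      using False by (intro eventually_nhds_in_open) auto
    hence "eventually (\<lambda>t. psi t = sinh t / t) (nhds x)"
      by eventually_elim (auto simp: psi_def)
    moreover have "isCont (\<lambda>t. sinh t / t) x" using False by (auto intro!: continuous_intros)
    ultimately show ?thesis using isCont_cong[of psi "\<lambda>t. sinh t / t" x] by blast
  qed
  then show ?thesis by (simp add: continuous_on_eq_continuous_at)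
qed

definition phi :: "int \<Rightarrow> real \<Rightarrow> real" where
  "phi k t = t * sinh t / (t\<^sup>2 + pi\<^sup>2 * (of_int k)\<^sup>2)"

lemma calC_phi: "calC k y = integral {0..y} (phi k)"
  unfolding calC_def phi_def by simp

lemma phi_integrable: "phi k integrable_on {a..b}"
proof (cases "k = 0")
  case False
  have "t\<^sup>2 + pi\<^sup>2 * (of_int k)\<^sup>2 \<noteq> 0" for t :: real
  proof -
    have "pi\<^sup>2 * (of_int k)\<^sup>2 > 0" using False by simp
    hence "t\<^sup>2 + pi\<^sup>2 * (of_int k)\<^sup>2 > 0" by (simp add: add_nonneg_pos)
    thus ?thesis by simp
  qed
  hence "continuous_on {a..b} (phi k)" unfolding phi_def by (auto intro!: continuous_intros)
  then show ?thesis by (rule integrable_continuous_real)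
next
  case True
  have "psi integrable_on {a..b}"
    by (rule integrable_continuous_real) (rule continuous_on_subset[OF continuous_psi], simp)
  moreover have "phi k t = psi t" if "t \<in> {a..b} - {0}" for t
    using that True by (simp add: phi_def psi_def power2_eq_square)
  ultimately show ?thesis by (metis integrable_spike_finite finite.emptyI finite_insert)
qed

definition bnd :: "real \<Rightarrow> int \<Rightarrow> real" where
  "bnd y k = (if k = 0 then cosh y else y * sinh y / (pi\<^sup>2 * (of_int k)\<^sup>2))"

lemma phi_bounds:
  assumes "0 \<le> t" "t \<le> y"
  shows "0 \<le> phi k t" "phi k t \<le> bnd y k"
proof -
  have den: "t\<^sup>2 + pi\<^sup>2 * (of_int k)\<^sup>2 \<ge> 0" by simp
  show "0 \<le> phi k t" unfolding phi_def using assms den by simp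
  show "phi k t \<le> bnd y k"
  proof (cases "k = 0")
    case k0: True
    show ?thesis
    proof (cases "t = 0")
      case True then show ?thesis using k0 by (simp add: phi_def bnd_def)
    next
      case False
      hence tp: "t > 0" using assms by simp
      have "phi k t = sinh t / t" using k0 tp by (simp add: phi_def power2_eq_square)
      also have "\<dots> \<le> cosh t" using sinh_le_t_cosh[of t] tp by (simp add: divide_simps mult.commute)
      also have "\<dots> \<le> cosh y" using assms cosh_real_nonneg_le_iff by simp
      finally show ?thesis using k0 by (simp add: bnd_def)
    qed
  next
    case False
    have kp: "pi\<^sup>2 * (of_int k)\<^sup>2 > 0" using False by simp
    have "phi k t \<le> t * sinh t / (pi\<^sup>2 * (of_int k)\<^sup>2)"
    proof -
      have "t\<^sup>2 + pi\<^sup>2 * (of_int k)\<^sup>2 > 0" using kp by (simp add: add_nonneg_pos)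
      then show ?thesis
        unfolding phi_def using assms kp by (intro divide_left_mono) (auto intro: mult_pos_pos)
    qed
    also have "\<dots> \<le> y * sinh y / (pi\<^sup>2 * (of_int k)\<^sup>2)"
      using assms kp by (intro divide_right_mono mult_mono) auto
    finally show ?thesis using False by (simp add: bnd_def)
  qed
qed

lemma calC_bound:
  assumes "y \<ge> 0"
  shows "\<bar>calC k y\<bar> \<le> y * bnd y k"
proof -
  have "0 \<le> calC k y" unfolding calC_phi
    by (rule integral_nonneg[OF phi_integrable]) (use phi_bounds in auto)
  moreover have "calC k y \<le> integral {0..y} (\<lambda>t. bnd y k)" unfolding calC_phi
    by (rule integral_le[OF phi_integrable]) (use phi_bounds in auto)
  moreover have "integral {0..y} (\<lambda>t. bnd y k) = y * bnd y k" using assms by simp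
  ultimately show ?thesis using assms by simp
qed

lemma bnd_nonneg: "y \<ge> 0 \<Longrightarrow> bnd y k \<ge> 0"
  by (simp add: bnd_def)

lemma bnd_minus: "bnd y (- k) = bnd y k"
  by (simp add: bnd_def)

lemma bnd_sum_plus:
  assumes y: "y \<ge> 0" and n: "n \<ge> 0"
  shows "summable (\<lambda>j::nat. bnd y (n + (int j + 1)))"
proof (rule summable_comparison_test')
  have "summable (\<lambda>j::nat. inverse (real (Suc j) ^ 2))"
    using inverse_power_summable[of 2, where 'a=real] by (subst summable_Suc_iff) simp
  then show "summable (\<lambda>j::nat. (y * sinh y / pi\<^sup>2) * inverse (real (Suc j) ^ 2))"
    by (rule summable_mult)
next
  fix j :: nat assume "j \<ge> 0"
  have ne: "n + (int j + 1) \<noteq> 0" using n by simp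
  have le: "(real j + 1)\<^sup>2 \<le> (of_int n + (real j + 1))\<^sup>2"
    using n by (intro power_mono) auto
  have c: "y * sinh y \<ge> 0" using y by simp
  have "bnd y (n + (int j + 1)) = y * sinh y / (pi\<^sup>2 * (of_int n + (real j + 1))\<^sup>2)"
    using ne by (simp add: bnd_def)
  also have "\<dots> \<le> y * sinh y / (pi\<^sup>2 * (real j + 1)\<^sup>2)"
    using le c by (intro divide_left_mono mult_left_mono) (auto intro!: mult_pos_pos)
  also have "\<dots> = (y * sinh y / pi\<^sup>2) * inverse (real (Suc j) ^ 2)"
    by (simp add: field_simps)
  finally show "norm (bnd y (n + (int j + 1))) \<le> (y * sinh y / pi\<^sup>2) * inverse (real (Suc j) ^ 2)"
    using bnd_nonneg[OF y] by simp
qed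

lemma bnd_sum_minus:
  assumes y: "y \<ge> 0" and n: "n \<ge> 0"
  shows "summable (\<lambda>j::nat. bnd y (n - (int j + 1)))"
proof -
  have "summable (\<lambda>j::nat. bnd y (0 + (int j + 1)))" by (rule bnd_sum_plus[OF y]) simp
  moreover have "bnd y (n - (int (j + nat n) + 1)) = bnd y (0 + (int j + 1))" for j
    using n bnd_minus[of y "int j + 1"] by (simp add: algebra_simps)
  ultimately have "summable (\<lambda>j::nat. bnd y (n - (int (j + nat n) + 1)))" by simp
  then show ?thesis by (subst summable_iff_shift[symmetric, of _ "nat n"])
qed

lemma integral_h:
  fixes y :: real and n :: int
  assumes y: "y > 0"
  shows "((\<lambda>t. if t = 0 then 0 else pi\<^sup>2 * of_int n * (cosh t - 2 * t * sinh t / (t\<^sup>2 + pi\<^sup>2 * (of_int n)\<^sup>2)) / (t\<^sup>2 + pi\<^sup>2 * (of_int n)\<^sup>2))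
          has_integral (pi\<^sup>2 * of_int n * sinh y / (y\<^sup>2 + pi\<^sup>2 * (of_int n)\<^sup>2))) {0..y}"
proof (cases "n = 0")
  case True
  hence "(\<lambda>t. if t = 0 then 0 else pi\<^sup>2 * of_int n * (cosh t - 2 * t * sinh t / (t\<^sup>2 + pi\<^sup>2 * (of_int n)\<^sup>2)) / (t\<^sup>2 + pi\<^sup>2 * (of_int n)\<^sup>2)) = (\<lambda>t. 0)"
    by (intro ext) simp
  then show ?thesis using True by simp
next
  case False
  define N where "N = (of_int n :: real)"
  define c where "c = pi\<^sup>2 * N\<^sup>2"
  have c: "c > 0" using False by (simp add: c_def N_def)
  have pos: "t\<^sup>2 + c > 0" for t :: real using c by (simp add: add_nonneg_pos)
  define H where "H t = pi\<^sup>2 * N * sinh t / (t\<^sup>2 + c)" for t :: real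
  define h where "h t = pi\<^sup>2 * N * (cosh t - 2 * t * sinh t / (t\<^sup>2 + c)) / (t\<^sup>2 + c)" for t :: real
  have D: "(H has_real_derivative h t) (at t)" for t
  proof -
    have ne: "t\<^sup>2 + c \<noteq> 0" using pos[of t] by simp
    have "(H has_real_derivative (pi\<^sup>2 * N * (cosh t * (t\<^sup>2 + c) - sinh t * (2 * t)) / (t\<^sup>2 + c)\<^sup>2)) (at t)"
      unfolding H_def using ne
      by (auto intro!: derivative_eq_intros simp: power2_eq_square field_simps)
    moreover have "pi\<^sup>2 * N * (cosh t * (t\<^sup>2 + c) - sinh t * (2 * t)) / (t\<^sup>2 + c)\<^sup>2 = h t"
      unfolding h_def using ne by (simp add: field_simps power2_eq_square)
    ultimately show ?thesis by simp
  qed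
  have "(h has_integral (H y - H 0)) {0..y}"
    by (rule fundamental_theorem_of_calculus)
       (use y D in \<open>auto intro: has_field_derivative_at_within simp: has_real_derivative_iff_has_vector_derivative[symmetric]\<close>)
  moreover have "H y - H 0 = pi\<^sup>2 * of_int n * sinh y / (y\<^sup>2 + pi\<^sup>2 * (of_int n)\<^sup>2)"
    by (simp add: H_def N_def c_def)
  ultimately have "(h has_integral (pi\<^sup>2 * of_int n * sinh y / (y\<^sup>2 + pi\<^sup>2 * (of_int n)\<^sup>2))) {0..y}"
    by simp
  then show ?thesis
    by (rule has_integral_spike_finite[where S="{0}" and f=h, rotated 2]) (auto simp: h_def N_def c_def)
qed

lemma div_succ_le:
  fixes a :: real assumes "a \<ge> 0" shows "a / (real j + 1) \<le> a"
proof -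
  have "a * 1 \<le> a * (real j + 1)" using assms by (intro mult_left_mono) auto
  then show ?thesis by (simp add: divide_simps)
qed

lemma main_nonneg:
  fixes y :: real and n :: int
  assumes y: "y > 0" and n: "n \<ge> 0"
  shows "((\<lambda>m::int. (1 / pi) * (calC (n - m) y / of_int m)) has_sum calD n y) UNIV"
proof -
  define F where "F m = (1 / pi) * (calC (n - m) y / of_int m)" for m
  define p where "p j t = (phi (n - (int j + 1)) t - phi (n + (int j + 1)) t) / (real j + 1)" for j :: nat and t
  define M where "M j = bnd y (n - (int j + 1)) + bnd y (n + (int j + 1))" for j
  have y0: "y \<ge> 0" using y by simp
  have sM: "summable M" unfolding M_def
    by (intro summable_add bnd_sum_minus bnd_sum_plus y0 n)
  have Mnn: "M j \<ge> 0" for j unfolding M_def using bnd_nonneg[OF y0] by (simp add: add_nonneg_nonneg)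
  have s1: "summable (\<lambda>j. norm (F (int j + 1)))"
  proof (rule summable_comparison_test')
    show "summable (\<lambda>j. (y / pi) * M j)" by (rule summable_mult[OF sM])
  next
    fix j :: nat assume "j \<ge> 0"
    have "norm (F (int j + 1)) = (1 / pi) * (\<bar>calC (n - (int j + 1)) y\<bar> / (real j + 1))"
      by (simp add: F_def abs_mult)
    also have "\<dots> \<le> (1 / pi) * \<bar>calC (n - (int j + 1)) y\<bar>"
      by (intro mult_left_mono div_succ_le) auto
    also have "\<dots> \<le> (1 / pi) * (y * bnd y (n - (int j + 1)))"
      by (intro mult_left_mono calC_bound y0) auto
    also have "\<dots> \<le> (y / pi) * M j"
      unfolding M_def using bnd_nonneg[OF y0, of "n + (int j + 1)"] y0 by (simp add: field_simps)
    finally show "norm (norm (F (int j + 1))) \<le> (y / pi) * M j" by simp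
  qed
  have s2: "summable (\<lambda>j. norm (F (- int j - 1)))"
  proof (rule summable_comparison_test')
    show "summable (\<lambda>j. (y / pi) * M j)" by (rule summable_mult[OF sM])
  next
    fix j :: nat assume "j \<ge> 0"
    have e: "n - (- int j - 1) = n + (int j + 1)" by simp
    have "norm (F (- int j - 1)) = (1 / pi) * (\<bar>calC (n + (int j + 1)) y\<bar> / (real j + 1))"
      unfolding F_def e by (simp add: abs_mult)
    also have "\<dots> \<le> (1 / pi) * \<bar>calC (n + (int j + 1)) y\<bar>"
      by (intro mult_left_mono div_succ_le) auto
    also have "\<dots> \<le> (1 / pi) * (y * bnd y (n + (int j + 1)))"
      by (intro mult_left_mono calC_bound y0) auto
    also have "\<dots> \<le> (y / pi) * M j"
      unfolding M_def using bnd_nonneg[OF y0, of "n - (int j + 1)"] y0 by (simp add: field_simps)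
    finally show "norm (norm (F (- int j - 1))) \<le> (y / pi) * M j" by simp
  qed
  have pint: "(p j has_integral ((calC (n - (int j + 1)) y - calC (n + (int j + 1)) y) / (real j + 1))) {0..y}" for j
    unfolding p_def calC_phi
    by (intro has_integral_divide has_integral_diff integrable_integral phi_integrable)
  have pair: "F (int j + 1) + F (- int j - 1) = (1 / pi) * integral {0..y} (p j)" for j
  proof -
    have e: "n - (- int j - 1) = n + (int j + 1)" by simp
    have o: "of_int (- int j - 1) = - (real j + 1)" by simp
    have a: "F (int j + 1) = (1 / pi) * (calC (n - (int j + 1)) y / (real j + 1))"
      by (simp add: F_def add.commute)
    have b: "F (- int j - 1) = - ((1 / pi) * (calC (n + (int j + 1)) y / (real j + 1)))"
    proof -
      have "real j + 1 \<noteq> 0" "- real j - 1 \<noteq> 0" by linarith+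
      show ?thesis unfolding F_def e o by (simp only: divide_minus_right mult_minus_right)
    qed
    show ?thesis unfolding a b integral_unique[OF pint]
      by (simp add: diff_divide_distrib right_diff_distrib)
  qed
  define h where "h t = pi\<^sup>2 * of_int n * (cosh t - 2 * t * sinh t / (t\<^sup>2 + pi\<^sup>2 * (of_int n)\<^sup>2)) / (t\<^sup>2 + pi\<^sup>2 * (of_int n)\<^sup>2)" for t
  define g where "g t = (if t = 0 then 0 else h t)" for t :: real
  have conv: "(\<lambda>N. \<Sum>j<N. p j t) \<longlonglongrightarrow> g t" if "t \<in> {0..y}" for t
  proof (cases "t = 0")
    case True
    then show ?thesis by (simp add: g_def p_def phi_def)
  next
    case False
    hence t: "t > 0" using that by simp
    have "(\<lambda>j. p j t) sums h t"
      using pointwise[OF t n] unfolding p_def phi_def h_def by simp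
    then show ?thesis using False by (simp add: g_def sums_def)
  qed
  have bound: "norm (\<Sum>j<N. p j t) \<le> suminf M" if "t \<in> {0..y}" for t N
  proof -
    have pb: "norm (p j t) \<le> M j" for j
    proof -
      have b1: "0 \<le> phi (n - (int j + 1)) t" "phi (n - (int j + 1)) t \<le> bnd y (n - (int j + 1))"
        using phi_bounds that by auto
      have b2: "0 \<le> phi (n + (int j + 1)) t" "phi (n + (int j + 1)) t \<le> bnd y (n + (int j + 1))"
        using phi_bounds that by auto
      have "norm (p j t) = \<bar>phi (n - (int j + 1)) t - phi (n + (int j + 1)) t\<bar> / (real j + 1)"
        by (simp add: p_def)
      also have "\<dots> \<le> \<bar>phi (n - (int j + 1)) t - phi (n + (int j + 1)) t\<bar>"
        by (intro div_succ_le) auto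
      also have "\<dots> \<le> M j" unfolding M_def using b1 b2 by linarith
      finally show ?thesis .
    qed
    have "norm (\<Sum>j<N. p j t) \<le> (\<Sum>j<N. norm (p j t))" by (rule norm_sum)
    also have "\<dots> \<le> (\<Sum>j<N. M j)" by (intro sum_mono pb)
    also have "\<dots> \<le> suminf M" by (rule sum_le_suminf[OF sM]) (auto intro: Mnn)
    finally show ?thesis .
  qed
  have intN: "(\<lambda>t. \<Sum>j<N. p j t) integrable_on {0..y}" for N
    by (intro integrable_sum) (auto intro: has_integral_integrable[OF pint])
  have lim: "(\<lambda>N. integral {0..y} (\<lambda>t. \<Sum>j<N. p j t)) \<longlonglongrightarrow> integral {0..y} g"
    by (rule dominated_convergence(2)[OF intN _ bound conv]) (auto intro: integrable_const_ivl)
  have gint: "integral {0..y} g = pi\<^sup>2 * of_int n * sinh y / (y\<^sup>2 + pi\<^sup>2 * (of_int n)\<^sup>2)"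
    using integral_h[OF y, of n] unfolding g_def h_def by (rule integral_unique)
  have partial: "(\<Sum>j<N. F (int j + 1) + F (- int j - 1)) = (1 / pi) * integral {0..y} (\<lambda>t. \<Sum>j<N. p j t)" for N
    by (subst integral_sum) (auto simp: pair sum_distrib_left intro: has_integral_integrable[OF pint])
  have "(\<lambda>N. \<Sum>j<N. F (int j + 1) + F (- int j - 1)) \<longlonglongrightarrow> (1 / pi) * integral {0..y} g"
    unfolding partial by (intro tendsto_mult tendsto_const lim)
  moreover have "(1 / pi) * integral {0..y} g = calD n y"
  proof (cases "n = 0")
    case True then show ?thesis by (simp add: gint calD_def)
  next
    case False
    have "y\<^sup>2 + pi\<^sup>2 * (of_int n)\<^sup>2 \<noteq> 0" using y by (metis add_pos_nonneg less_irrefl mult_nonneg_nonneg zero_le_power2 zero_less_power2)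
    then show ?thesis using False unfolding gint calD_def
      by (simp add: divide_simps) (simp add: algebra_simps power2_eq_square)
  qed
  ultimately have "(\<lambda>j. F (int j + 1) + F (- int j - 1)) sums calD n y"
    by (simp add: sums_def)
  from int_pairs_to_has_sum[OF s1 s2 this]
  show ?thesis by (simp add: F_def[abs_def])
qed

lemma calC_minus: "calC (- k) y = calC k y"
  by (simp add: calC_def)

lemma calD_minus: "calD (- k) y = - calD k y"
  by (simp add: calD_def)

lemma main_all:
  fixes y :: real and n :: int
  assumes y: "y > 0"
  shows "((\<lambda>m::int. (1 / pi) * (calC (n - m) y / of_int m)) has_sum calD n y) UNIV"
proof (cases "n \<ge> 0")
  case True then show ?thesis using main_nonneg[OF y] by blast
next
  case False
  define n' where "n' = - n"
  have n': "n' \<ge> 0" using False by (simp add: n'_def)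
  have h: "((\<lambda>m::int. (1 / pi) * (calC (n' - m) y / of_int m)) has_sum calD n' y) UNIV"
    by (rule main_nonneg[OF y n'])
  have "((\<lambda>m::int. (1 / pi) * (calC (n' - m) y / of_int m)) has_sum calD n' y) UNIV \<longleftrightarrow>
        ((\<lambda>m::int. (1 / pi) * (calC (n' - (- m)) y / of_int (- m))) has_sum calD n' y) UNIV"
    by (rule has_sum_reindex_bij_witness[where i = uminus and j = uminus]) auto
  with h have "((\<lambda>m::int. (1 / pi) * (calC (n' - (- m)) y / of_int (- m))) has_sum calD n' y) UNIV"
    by blast
  from has_sum_cmult_right[OF this, of "-1"]
  have "((\<lambda>m::int. - ((1 / pi) * (calC (n' - (- m)) y / of_int (- m)))) has_sum - calD n' y) UNIV"
    by simp
  moreover have eq: "- ((1 / pi) * (calC (n' - (- m)) y / of_int (- m))) = (1 / pi) * (calC (n - m) y / of_int m)" for m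
  proof -
    have "calC (n' - (- m)) y = calC (- (n' - (- m))) y" by (rule calC_minus[symmetric])
    also have "- (n' - (- m)) = n - m" by (simp add: n'_def)
    finally show ?thesis by simp
  qed
  moreover have "- calD n' y = calD n y" using calD_minus[of n' y] by (simp add: n'_def)
  ultimately show ?thesis unfolding eq by simp
qed

theorem lemma3p14:
  fixes y :: real and n :: int
  assumes "y > 0"
  shows "((\<lambda>m::int. (1 / pi) * (calC (n - m) y / of_int m)) has_sum calD n y) (UNIV - {0})"
proof -
  have "((\<lambda>m::int. (1 / pi) * (calC (n - m) y / of_int m)) has_sum calD n y) UNIV"
    by (rule main_all[OF assms])
  then show ?thesis
    by (subst has_sum_cong_neutral[where T = UNIV and g = "\<lambda>m::int. (1 / pi) * (calC (n - m) y / of_int m)"]) auto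
qed

end
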